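(* Assume the index sets are ordered ($\mathcal I_1=\{1,\dots,l\}$, $\mathcal I_0=\{l+1,\dots,n\}$) and let $\psi$ be the SC decoder. Then for every decoder $\phi:\mathcal X^l\times\mathcal Y^n\to\mathcal X^n$, $$\Pr\big(\psi(A\mathbf X,\mathbf Y)\neq\mathbf X\big)\le n\,\Pr\big(\phi(A\mathbf X,\mathbf Y)\neq\mathbf X\big).$$ In particular, if $\Pr(\phi(A\mathbf X,\mathbf Y)\neq\mathbf X)=o(1/n)$ along a sequence of codes, then $\Pr(\psi(A\mathbf X,\mathbf Y)\neq\mathbf X)\to0$.
   Context: Setup: $\mathcal X,\mathcal Y$ finite, $|\mathcal X|\ge2$; $(\mathbf X,\mathbf Y)$ random on $\mathcal X^n\times\mathcal Y^n$; $A:\mathcal X^n\to\mathcal X^l$; $\{\mathcal I_0,\mathcal I_1\}$ a partition of $\{1,\dots,n\}$ with $|\mathcal I_1|=l$; $B:\mathcal X^n\to\mathcal X^{n-l}$ such that $T:\mathcal X^n\to\mathcal X^n$ is bijective, where $T(x)$ is the vector $c$ whose entries on $\mathcal I_1$ (increasing order) form $Ax$ and whose entries on $\mathcal I_0$ (increasing order) form $Bx$. Notation: $c_i^j=(c_i,\dots,c_j)$. Extended codeword: $\mathbf C=(C_1,\dots,C_n)=T(\mathbf X)$. SC decoder: for $i\in\mathcal I_0$ let $f_i(c_1^{i-1},y)\in\arg\max_{a\in\mathcal X}\mu_{C_i\mid C_1^{i-1}\mathbf Y}(a\mid c_1^{i-1},y)$ (ties and zero-probability conditions resolved by an arbitrary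 fixed rule). Given $(u,y)\in\mathcal X^l\times\mathcal Y^n$, define $\hat c$ recursively for $i=1,\dots,n$: $\hat c_{\mathcal I_1}=u$ (entries on $\mathcal I_1$ given by $u$), and $\hat c_i=f_i(\hat c_1^{i-1},y)$ for $i\in\mathcal I_0$. Then $\psi(u,y)\equiv T^{-1}(\hat c)$. *)

theory Defs
  imports "HOL-Probability.Probability"
begin

text \<open>Vectors in X^n are lists of length n (positions 1..n correspond to list
indices 0..n-1). With I_1 = {1..l}, I_0 = {l+1..n}, the extended codeword is
T x = A x @ B x.\<close>

definition ext_map :: "('x list \<Rightarrow> 'x list) \<Rightarrow> ('x list \<Rightarrow> 'x list) \<Rightarrow> 'x list \<Rightarrow> 'x list" where
  "ext_map A B x = A x @ B x"

definition codeword_pmf :: "('x list \<times> 'y list) pmf \<Rightarrow> ('x list \<Rightarrow> 'x list) \<Rightarrow> ('x list \<Rightarrow> 'x list)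
    \<Rightarrow> ('x list \<times> 'y list) pmf" where
  "codeword_pmf \<mu> A B = map_pmf (\<lambda>(x, y). (ext_map A B x, y)) \<mu>"

definition prefix_prob :: "('x list \<times> 'y list) pmf \<Rightarrow> nat \<Rightarrow> 'x list \<Rightarrow> 'y list \<Rightarrow> real" where
  "prefix_prob \<nu> i c y = measure_pmf.prob \<nu> {(cw, y'). take (i - 1) cw = c \<and> y' = y}"

definition cond_prob_C :: "('x list \<times> 'y list) pmf \<Rightarrow> nat \<Rightarrow> 'x \<Rightarrow> 'x list \<Rightarrow> 'y list \<Rightarrow> real" where
  "cond_prob_C \<nu> i a c y =
     measure_pmf.prob \<nu> {(cw, y'). take (i - 1) cw = c \<and> cw ! (i - 1) = a \<and> y' = y}
     / prefix_prob \<nu> i c y"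

text \<open>f is an admissible family of SC decision rules: for every i in I_0 and every
conditioning value of positive probability, f i c y is a maximizer of the
conditional probability; otherwise (ties, zero-probability conditions) arbitrary.\<close>
definition is_SC_rule :: "('x list \<times> 'y list) pmf \<Rightarrow> ('x list \<Rightarrow> 'x list) \<Rightarrow> ('x list \<Rightarrow> 'x list)
    \<Rightarrow> nat \<Rightarrow> nat \<Rightarrow> (nat \<Rightarrow> 'x list \<Rightarrow> 'y list \<Rightarrow> 'x) \<Rightarrow> bool" where
  "is_SC_rule \<mu> A B n l f \<longleftrightarrow>
     (\<forall>i \<in> {l+1..n}. \<forall>c y. length c = i - 1 \<longrightarrow>
        prefix_prob (codeword_pmf \<mu> A B) i c y > 0 \<longrightarrow>
        (\<forall>a. cond_prob_C (codeword_pmf \<mu> A B) i a c y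
               \<le> cond_prob_C (codeword_pmf \<mu> A B) i (f i c y) c y))"

fun sc_extend :: "(nat \<Rightarrow> 'x list \<Rightarrow> 'y list \<Rightarrow> 'x) \<Rightarrow> 'y list \<Rightarrow> 'x list \<Rightarrow> nat \<Rightarrow> 'x list" where
  "sc_extend f y c 0 = c"
| "sc_extend f y c (Suc k) =
     (let c' = sc_extend f y c k in c' @ [f (Suc (length c')) c' y])"

definition sc_decoder :: "(nat \<Rightarrow> 'x list \<Rightarrow> 'y list \<Rightarrow> 'x) \<Rightarrow> ('x list \<Rightarrow> 'x list) \<Rightarrow> ('x list \<Rightarrow> 'x list)
    \<Rightarrow> nat \<Rightarrow> nat \<Rightarrow> 'x list \<Rightarrow> 'y list \<Rightarrow> 'x list" where
  "sc_decoder f A B n l u y =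
     the_inv_into {x. length x = n} (ext_map A B) (sc_extend f y u (n - l))"

definition err_prob :: "('x list \<times> 'y list) pmf \<Rightarrow> ('x list \<Rightarrow> 'x list)
    \<Rightarrow> ('x list \<Rightarrow> 'y list \<Rightarrow> 'x list) \<Rightarrow> real" where
  "err_prob \<mu> A dec = measure_pmf.prob \<mu> {(x, y). dec (A x) y \<noteq> x}"

end

theory Submission
  imports Defs
begin


lemma prob_sum_supp:
  assumes "finite (set_pmf p)"
  shows "measure_pmf.prob p S = sum (pmf p) (S \<inter> set_pmf p)"
  by (metis assms measure_Int_set_pmf measure_measure_pmf_finite finite_Int)

lemma prob_mono_supp:
  assumes "\<And>z. z \<in> set_pmf p \<Longrightarrow> z \<in> S \<Longrightarrow> z \<in> S'"
  shows "measure_pmf.prob p S \<le> measure_pmf.prob p S'"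
proof -
  have "measure_pmf.prob p S = measure_pmf.prob p (S \<inter> set_pmf p)" by (simp add: measure_Int_set_pmf)
  also have "\<dots> \<le> measure_pmf.prob p S'"
    by (rule measure_pmf.finite_measure_mono) (use assms in auto)
  finally show ?thesis .
qed

lemma prob_neq_eq:
  "measure_pmf.prob p {z. \<not> P z} = 1 - measure_pmf.prob p {z. P z}"
proof -
  have "{z. \<not> P z} = space (measure_pmf p) - {z. P z}" by auto
  then show ?thesis using measure_pmf.prob_compl[of "{z. P z}" p] by simp
qed

lemma prob_neq_eq2:
  "measure_pmf.prob p {(c,y). \<not> P c y} = 1 - measure_pmf.prob p {(c,y). P c y}"
proof -
  have "{(c,y). \<not> P c y} = space (measure_pmf p) - {(c,y). P c y}" by auto
  then show ?thesis using measure_pmf.prob_compl[of "{(c,y). P c y}" p] by simp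
qed

lemma map_opt:
  fixes \<nu> :: "('x list \<times> 'y list) pmf"
  assumes fin: "finite (set_pmf \<nu>)"
    and len: "\<And>z. z \<in> set_pmf \<nu> \<Longrightarrow> length (fst z) = n"
    and i: "i \<le> n"
    and opt: "\<And>c y. length c = i - 1 \<Longrightarrow> prefix_prob \<nu> i c y > 0 \<Longrightarrow>
       (\<forall>a. cond_prob_C \<nu> i a c y \<le> cond_prob_C \<nu> i (F c y) c y)"
  shows "measure_pmf.prob \<nu> {(c,y). c!(i-1) = H (take (i-1) c) y}
      \<le> measure_pmf.prob \<nu> {(c,y). c!(i-1) = F (take (i-1) c) y}"
proof -
  define key where "key z = (take (i-1) (fst z), snd z)" for z :: "'x list \<times> 'y list"
  define K where "K = key ` set_pmf \<nu>"
  have finK: "finite K" using fin by (simp add: K_def)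
  define Q where "Q p y0 a = measure_pmf.prob \<nu> {(cw, y'). take (i - 1) cw = p \<and> cw ! (i - 1) = a \<and> y' = y0}" for p y0 a
  have decomp: "measure_pmf.prob \<nu> {(c,y). c!(i-1) = Hh (take (i-1) c) y}
     = (\<Sum>\<kappa>\<in>K. Q (fst \<kappa>) (snd \<kappa>) (Hh (fst \<kappa>) (snd \<kappa>)))" for Hh
  proof -
    let ?S = "{(c,y). c!(i-1) = Hh (take (i-1) c) y} \<inter> set_pmf \<nu>"
    have "measure_pmf.prob \<nu> {(c,y). c!(i-1) = Hh (take (i-1) c) y} = sum (pmf \<nu>) ?S"
      by (rule prob_sum_supp[OF fin])
    also have "\<dots> = (\<Sum>\<kappa>\<in>K. sum (pmf \<nu>) {z \<in> ?S. key z = \<kappa>})"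
      by (rule sum.group[symmetric]) (use fin finK in \<open>auto simp: K_def\<close>)
    also have "\<dots> = (\<Sum>\<kappa>\<in>K. Q (fst \<kappa>) (snd \<kappa>) (Hh (fst \<kappa>) (snd \<kappa>)))"
    proof (rule sum.cong[OF refl])
      fix \<kappa> assume "\<kappa> \<in> K"
      have "{z \<in> ?S. key z = \<kappa>} = {(cw, y'). take (i - 1) cw = fst \<kappa> \<and> cw ! (i - 1) = Hh (fst \<kappa>) (snd \<kappa>) \<and> y' = snd \<kappa>} \<inter> set_pmf \<nu>"
        by (cases \<kappa>) (auto simp: key_def)
      then show "sum (pmf \<nu>) {z \<in> ?S. key z = \<kappa>} = Q (fst \<kappa>) (snd \<kappa>) (Hh (fst \<kappa>) (snd \<kappa>))"
        by (simp add: Q_def prob_sum_supp[OF fin])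
    qed
    finally show ?thesis .
  qed
  have "(\<Sum>\<kappa>\<in>K. Q (fst \<kappa>) (snd \<kappa>) (H (fst \<kappa>) (snd \<kappa>))) \<le> (\<Sum>\<kappa>\<in>K. Q (fst \<kappa>) (snd \<kappa>) (F (fst \<kappa>) (snd \<kappa>)))"
  proof (rule sum_mono)
    fix \<kappa> assume k: "\<kappa> \<in> K"
    obtain p y0 where kp: "\<kappa> = (p, y0)" by (cases \<kappa>)
    have lp: "length p = i - 1" using k i len by (auto simp: K_def key_def kp)
    have QF: "Q p y0 a \<le> prefix_prob \<nu> i p y0" for a
      unfolding Q_def prefix_prob_def
      by (rule measure_pmf.finite_measure_mono) auto
    show "Q (fst \<kappa>) (snd \<kappa>) (H (fst \<kappa>) (snd \<kappa>)) \<le> Q (fst \<kappa>) (snd \<kappa>) (F (fst \<kappa>) (snd \<kappa>))"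
    proof (cases "prefix_prob \<nu> i p y0 > 0")
      case True
      have "Q p y0 (H p y0) / prefix_prob \<nu> i p y0 \<le> Q p y0 (F p y0) / prefix_prob \<nu> i p y0"
        using opt[OF lp True] by (simp add: cond_prob_C_def Q_def)
      then show ?thesis using True by (simp add: kp divide_le_cancel)
    next
      case False
      then have "prefix_prob \<nu> i p y0 = 0"
        using measure_nonneg[of "measure_pmf \<nu>"] by (simp add: prefix_prob_def not_less order.antisym)
      then have "Q p y0 (H p y0) = 0" using QF[of "H p y0"] measure_nonneg[of "measure_pmf \<nu>"]
        by (simp add: Q_def order.antisym)
      moreover have "Q p y0 (F p y0) \<ge> 0" by (simp add: Q_def)
      ultimately show ?thesis by (simp add: kp)
    qed
  qed
  then show ?thesis by (simp only: decomp)
qed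

lemma sc_ext:
  assumes "take (length u) c = u" "length u + k \<le> length c"
    "\<And>i. length u < i \<Longrightarrow> i \<le> length u + k \<Longrightarrow> f i (take (i-1) c) y = c!(i-1)"
  shows "sc_extend f y u k = take (length u + k) c"
  using assms(2,3)
proof (induction k)
  case 0
  then show ?case using assms(1) by simp
next
  case (Suc k)
  have IH: "sc_extend f y u k = take (length u + k) c" using Suc by simp
  have lc: "length (take (length u + k) c) = length u + k" using Suc.prems by simp
  have "f (Suc (length u + k)) (take (length u + k) c) y = c ! (length u + k)"
    using Suc.prems(2)[of "Suc (length u + k)"] by simp
  then show ?case using Suc.prems(1)
    by (simp add: IH Let_def lc take_Suc_conv_app_nth)
qed

lemma single:
  fixes \<mu> :: "('x::finite list \<times> 'y::finite list) pmf"
  assumes supp: "set_pmf \<mu> \<subseteq> {(x, y). length x = n \<and> length y = n}"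
    and l_le: "l \<le> n"
    and A_len: "\<And>x. length x = n \<Longrightarrow> length (A x) = l"
    and B_len: "\<And>x. length x = n \<Longrightarrow> length (B x) = n - l"
    and T_bij: "bij_betw (ext_map A B) {x. length x = n} {x. length x = n}"
    and SC: "is_SC_rule \<mu> A B n l f"
  shows "err_prob \<mu> A (sc_decoder f A B n l) \<le> real n * err_prob \<mu> A \<phi>"
proof -
  define T where "T = ext_map A B"
  define \<nu> where "\<nu> = codeword_pmf \<mu> A B"
  have finmu: "finite (set_pmf \<mu>)"
    by (rule finite_subset[OF _ finite_cartesian_product[OF finite_lists_length_eq[of UNIV n] finite_lists_length_eq[of UNIV n]]])
       (use supp in auto)
  have nu_eq: "\<nu> = map_pmf (\<lambda>(x, y). (T x, y)) \<mu>" by (simp add: \<nu>_def codeword_pmf_def T_def)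
  have finnu: "finite (set_pmf \<nu>)" using finmu by (simp add: nu_eq)
  have lenT: "length (T x) = n" if "length x = n" for x
    using that A_len B_len l_le by (simp add: T_def ext_map_def)
  have lennu: "length (fst z) = n" if "z \<in> set_pmf \<nu>" for z
    using that supp lenT by (auto simp: nu_eq)
  have takeT: "take l (T x) = A x" if "length x = n" for x
    using that A_len by (simp add: T_def ext_map_def)
  define E where "E i = {(x,y). f i (take (i-1) (T x)) y \<noteq> T x ! (i-1)}" for i
  define P where "P = err_prob \<mu> A \<phi>"
  have step1: "err_prob \<mu> A (sc_decoder f A B n l) \<le> measure_pmf.prob \<mu> (\<Union>i\<in>{l+1..n}. E i)"
    unfolding err_prob_def
  proof (rule prob_mono_supp)
    fix z assume zs: "z \<in> set_pmf \<mu>" and ze: "z \<in> {(x, y). sc_decoder f A B n l (A x) y \<noteq> x}"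
    obtain x y where z: "z = (x,y)" by (cases z)
    have lx: "length x = n" using zs supp z by auto
    show "z \<in> (\<Union>i\<in>{l+1..n}. E i)"
    proof (rule ccontr)
      assume "z \<notin> (\<Union>i\<in>{l+1..n}. E i)"
      then have good: "\<And>i. l < i \<Longrightarrow> i \<le> n \<Longrightarrow> f i (take (i-1) (T x)) y = T x ! (i-1)"
        by (auto simp: E_def z)
      have "sc_extend f y (A x) (n - l) = take (length (A x) + (n - l)) (T x)"
        by (rule sc_ext) (use lx A_len l_le lenT good takeT in auto)
      then have "sc_extend f y (A x) (n - l) = T x" using lx A_len l_le lenT by simp
      then have "sc_decoder f A B n l (A x) y = x"
        unfolding sc_decoder_def T_def
        using the_inv_into_f_f[OF bij_betw_imp_inj_on[OF T_bij], of x] lx by (simp add: T_def)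
      then show False using ze z by simp
    qed
  qed
  have step2: "measure_pmf.prob \<mu> (\<Union>i\<in>{l+1..n}. E i) \<le> (\<Sum>i\<in>{l+1..n}. measure_pmf.prob \<mu> (E i))"
    by (rule measure_pmf.finite_measure_subadditive_finite) auto
  have step3: "measure_pmf.prob \<mu> (E i) \<le> P" if i: "i \<in> {l+1..n}" for i
  proof -
    define G where "G p y = T (\<phi> (take l p) y) ! (i-1)" for p y
    have "measure_pmf.prob \<mu> (E i) = measure_pmf.prob \<nu> {(c,y). \<not> (c!(i-1) = f i (take (i-1) c) y)}"
      unfolding nu_eq measure_map_pmf E_def by (intro arg_cong[where f="measure_pmf.prob \<mu>"]) auto
    also have "\<dots> = 1 - measure_pmf.prob \<nu> {(c,y). c!(i-1) = f i (take (i-1) c) y}"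
      by (rule prob_neq_eq2)
    also have "\<dots> \<le> 1 - measure_pmf.prob \<nu> {(c,y). c!(i-1) = G (take (i-1) c) y}"
    proof -
      have "measure_pmf.prob \<nu> {(c,y). c!(i-1) = G (take (i-1) c) y}
          \<le> measure_pmf.prob \<nu> {(c,y). c!(i-1) = f i (take (i-1) c) y}"
      proof (rule map_opt[OF finnu lennu])
        show "i \<le> n" using i by simp
        fix c y assume "length c = i - 1" "prefix_prob \<nu> i c y > 0"
        then show "\<forall>a. cond_prob_C \<nu> i a c y \<le> cond_prob_C \<nu> i (f i c y) c y"
          using SC i unfolding is_SC_rule_def \<nu>_def by blast
      qed
      then show ?thesis by simp
    qed
    also have "\<dots> = measure_pmf.prob \<nu> {(c,y). \<not> (c!(i-1) = G (take (i-1) c) y)}"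
      by (rule prob_neq_eq2[symmetric])
    also have "\<dots> = measure_pmf.prob \<mu> {(x,y). T x ! (i-1) \<noteq> G (take (i-1) (T x)) y}"
      unfolding nu_eq measure_map_pmf by (intro arg_cong[where f="measure_pmf.prob \<mu>"]) auto
    also have "\<dots> \<le> P"
      unfolding P_def err_prob_def
    proof (rule prob_mono_supp)
      fix z assume zs: "z \<in> set_pmf \<mu>" and ze: "z \<in> {(x,y). T x ! (i-1) \<noteq> G (take (i-1) (T x)) y}"
      obtain x y where z: "z = (x,y)" by (cases z)
      have lx: "length x = n" using zs supp z by auto
      have "take l (take (i-1) (T x)) = A x" proof -
        have "min l (i - 1) = l" using i by (simp add: min_def, arith)
        then show ?thesis using takeT[OF lx] by simp
      qed
      then show "z \<in> {(x, y). \<phi> (A x) y \<noteq> x}" using ze z by (auto simp: G_def)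
    qed
    finally show ?thesis .
  qed
  have P0: "P \<ge> 0" by (simp add: P_def err_prob_def)
  have "(\<Sum>i\<in>{l+1..n}. measure_pmf.prob \<mu> (E i)) \<le> (\<Sum>i\<in>{l+1..n}. P)"
    by (rule sum_mono) (rule step3)
  also have "\<dots> = real (n - l) * P" by simp
  also have "\<dots> \<le> real n * P" using P0 by (simp add: mult_right_mono)
  finally show ?thesis using step1 step2 by (simp add: P_def)
qed

theorem theorem2:
  fixes \<mu> :: "nat \<Rightarrow> ('x::finite list \<times> 'y::finite list) pmf"
    and n l :: "nat \<Rightarrow> nat"
    and A B :: "nat \<Rightarrow> 'x list \<Rightarrow> 'x list"
    and f :: "nat \<Rightarrow> nat \<Rightarrow> 'x list \<Rightarrow> 'y list \<Rightarrow> 'x"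
    and \<phi> :: "nat \<Rightarrow> 'x list \<Rightarrow> 'y list \<Rightarrow> 'x list"
  assumes card_X: "CARD('x) \<ge> 2"
    and supp: "\<And>k. set_pmf (\<mu> k) \<subseteq> {(x, y). length x = n k \<and> length y = n k}"
    and l_le: "\<And>k. l k \<le> n k"
    and A_len: "\<And>k x. length x = n k \<Longrightarrow> length (A k x) = l k"
    and B_len: "\<And>k x. length x = n k \<Longrightarrow> length (B k x) = n k - l k"
    and T_bij: "\<And>k. bij_betw (ext_map (A k) (B k)) {x. length x = n k} {x. length x = n k}"
    and SC: "\<And>k. is_SC_rule (\<mu> k) (A k) (B k) (n k) (l k) (f k)"
  shows "(\<forall>k. err_prob (\<mu> k) (A k) (sc_decoder (f k) (A k) (B k) (n k) (l k))
              \<le> real (n k) * err_prob (\<mu> k) (A k) (\<phi> k))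
         \<and> ((\<lambda>k. real (n k) * err_prob (\<mu> k) (A k) (\<phi> k)) \<longlonglongrightarrow> 0
              \<longrightarrow> (\<lambda>k. err_prob (\<mu> k) (A k) (sc_decoder (f k) (A k) (B k) (n k) (l k))) \<longlonglongrightarrow> 0)"
  proof (rule conjI)
  show A: "\<forall>k. err_prob (\<mu> k) (A k) (sc_decoder (f k) (A k) (B k) (n k) (l k))
              \<le> real (n k) * err_prob (\<mu> k) (A k) (\<phi> k)"
    using single[OF supp l_le A_len B_len T_bij SC] by blast
  show "(\<lambda>k. real (n k) * err_prob (\<mu> k) (A k) (\<phi> k)) \<longlonglongrightarrow> 0
              \<longrightarrow> (\<lambda>k. err_prob (\<mu> k) (A k) (sc_decoder (f k) (A k) (B k) (n k) (l k))) \<longlonglongrightarrow> 0"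
  proof
    assume lim: "(\<lambda>k. real (n k) * err_prob (\<mu> k) (A k) (\<phi> k)) \<longlonglongrightarrow> 0"
    show "(\<lambda>k. err_prob (\<mu> k) (A k) (sc_decoder (f k) (A k) (B k) (n k) (l k))) \<longlonglongrightarrow> 0"
      by (rule real_tendsto_sandwich[OF _ _ tendsto_const lim])
         (use A in \<open>auto simp: err_prob_def\<close>)
  qed
qed

end
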